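(* Let $\mathcal G$ be a finite biregular graph with parameters $\delta_B,\delta_R$, and let $P_{\mathcal G}(z)$ be its closed nonbacktracking walk generating function (defined in the context, analytic near $z=0$). Then $P_{\mathcal G}(z)$ extends analytically to \[\{|z|<1/\sqrt{\delta_R\delta_B}\}\setminus\{z\in\mathbb R:\ 1/(\delta_R\delta_B)\le|z|<1/\sqrt{\delta_R\delta_B}\}\] and to \[\{|z|>1/\sqrt{\delta_R\delta_B}\}\setminus\{z\in\mathbb R:\ 1/\sqrt{\delta_R\delta_B}<|z|\le1\},\] except for poles at $z=\pm i$.
   Context: Biregular graph: connected simple bipartite graph with vertex classes $\mathcal V_R,\mathcal V_B$, every vertex of $\mathcal V_B$ of degree $\delta_B+1$ and of $\mathcal V_R$ of degree $\delta_R+1$ (integers $\delta_B,\delta_R\ge1$); edges are identified with $[0,1]$. $P_{\mathcal G}(z)=N_{\mathcal E}+\sum_{l>0}\eta_lz^{l/2}$, where $N_{\mathcal E}$ is the number of edges and $\eta_l$ is the total number of closed nonbacktracking walks of length $l$ based at edge midpoints (summed over all $N_{\mathcal E}$ midpoints as basepoints); a closed nonbacktracking walk based at a midpoint $g$ is a closed edgepath at $g$ traversed at unit speed whose lift to the universal covering tree is a nonbacktracking path; only even $l$ occur, so $P_{\mathcal G}$ is a power series in $z$. *)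

theory Defs
  imports "HOL-Complex_Analysis.Complex_Analysis"
begin

definition biregular_graph ::
  "'a set \<Rightarrow> 'a set \<Rightarrow> 'a set \<Rightarrow> ('a \<Rightarrow> 'a \<Rightarrow> bool) \<Rightarrow> nat \<Rightarrow> nat \<Rightarrow> bool" where
  "biregular_graph V VR VB E \<delta>R \<delta>B \<longleftrightarrow>
     finite V \<and> V \<noteq> {} \<and> VR \<union> VB = V \<and> VR \<inter> VB = {} \<and>
     (\<forall>u v. E u v \<longrightarrow> E v u) \<and>
     (\<forall>u v. E u v \<longrightarrow> (u \<in> VR \<and> v \<in> VB) \<or> (u \<in> VB \<and> v \<in> VR)) \<and>
     (\<forall>u\<in>V. \<forall>v\<in>V. E\<^sup>*\<^sup>* u v) \<and>
     \<delta>R \<ge> 1 \<and> \<delta>B \<ge> 1 \<and>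
     (\<forall>v\<in>VB. card {w. E v w} = \<delta>B + 1) \<and>
     (\<forall>v\<in>VR. card {w. E v w} = \<delta>R + 1)"

definition graph_edges :: "('a \<Rightarrow> 'a \<Rightarrow> bool) \<Rightarrow> 'a set set" where
  "graph_edges E = {{u, v} | u v. E u v}"

definition num_edges :: "('a \<Rightarrow> 'a \<Rightarrow> bool) \<Rightarrow> nat" where
  "num_edges E = card (graph_edges E)"

text \<open>A closed nonbacktracking walk of length l based at the midpoint of the edge
  {ys!0, ys!1}, leaving the midpoint in the direction of ys!1: it runs through the
  second half of that edge, then the full edges ys!1 - ys!2 - ... - ys!l = ys!0,
  then the first half of the base edge back to the midpoint.  Its lift to the
  universal covering tree is nonbacktracking: no immediate reversal at any vertex,
  including at the basepoint midpoint (last edge differs from base edge reversed).\<close>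
definition closed_nb_walk :: "('a \<Rightarrow> 'a \<Rightarrow> bool) \<Rightarrow> nat \<Rightarrow> 'a list \<Rightarrow> bool" where
  "closed_nb_walk E l ys \<longleftrightarrow>
     l \<ge> 1 \<and> length ys = Suc l \<and> ys ! l = ys ! 0 \<and>
     (\<forall>i<l. E (ys ! i) (ys ! Suc i)) \<and>
     (\<forall>i. i + 2 \<le> l \<longrightarrow> ys ! (i + 2) \<noteq> ys ! i) \<and>
     ys ! (l - 1) \<noteq> ys ! 1"

definition closed_nb_walks_at :: "('a \<Rightarrow> 'a \<Rightarrow> bool) \<Rightarrow> 'a set \<Rightarrow> nat \<Rightarrow> 'a list set" where
  "closed_nb_walks_at E e l = {ys. closed_nb_walk E l ys \<and> {ys ! 0, ys ! 1} = e}"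

definition eta :: "('a \<Rightarrow> 'a \<Rightarrow> bool) \<Rightarrow> nat \<Rightarrow> nat" where
  "eta E l = (\<Sum>e\<in>graph_edges E. card (closed_nb_walks_at E e l))"

text \<open>P_G(z) = N_E + sum_{l>0} eta_l z^(l/2); only even l contribute (bipartite),
  so this is the power series N_E + sum_{m\<ge>1} eta_{2m} z^m.\<close>
definition P_G :: "('a \<Rightarrow> 'a \<Rightarrow> bool) \<Rightarrow> complex \<Rightarrow> complex" where
  "P_G E z = of_nat (num_edges E) + (\<Sum>m. of_nat (eta E (2 * Suc m)) * z ^ Suc m)"

definition region_inner :: "nat \<Rightarrow> nat \<Rightarrow> complex set" where
  "region_inner \<delta>R \<delta>B =
     {z. cmod z < 1 / sqrt (real (\<delta>R * \<delta>B))} -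
     {z. z \<in> \<real> \<and> 1 / real (\<delta>R * \<delta>B) \<le> cmod z \<and> cmod z < 1 / sqrt (real (\<delta>R * \<delta>B))}"

definition region_outer :: "nat \<Rightarrow> nat \<Rightarrow> complex set" where
  "region_outer \<delta>R \<delta>B =
     {z. cmod z > 1 / sqrt (real (\<delta>R * \<delta>B))} -
     {z. z \<in> \<real> \<and> 1 / sqrt (real (\<delta>R * \<delta>B)) < cmod z \<and> cmod z \<le> 1}"

end

theory Submission
  imports Defs "Jordan_Normal_Form.Schur_Decomposition"
begin

lemma mu_loc_real:
  fixes x a b s :: real
  assumes a: "a \<ge> 1" and b: "b \<ge> 1" and x: "x \<noteq> 0"
    and eq: "(x + a) * (x + b) = x * s" and s0: "0 \<le> s" and s1: "s \<le> (a+1)*(b+1)"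
  shows "1 \<le> \<bar>x\<bar> \<and> \<bar>x\<bar> \<le> a * b"
proof (cases "x > 0")
  case True
  have "(x - 1) * (x - a*b) = (s - (a+1)*(b+1)) * x" using eq by (simp add: algebra_simps)
  also have "\<dots> \<le> 0" using True s1 by (simp add: mult_nonpos_nonneg)
  finally have le: "(x - 1) * (x - a*b) \<le> 0" .
  have "1 * 1 \<le> a * b" by (rule mult_mono) (use a b in auto)
  hence ab: "a * b \<ge> 1" by simp
  have "1 \<le> x"
  proof (rule ccontr)
    assume "\<not> 1 \<le> x"
    hence "x - 1 < 0" "x - a*b < 0" using ab by auto
    hence "(x - 1) * (x - a*b) > 0" by (simp add: mult_neg_neg)
    thus False using le by simp
  qed
  moreover have "x \<le> a*b"
  proof (rule ccontr)
    assume "\<not> x \<le> a*b"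
    hence "x - 1 > 0" "x - a*b > 0" using ab by auto
    hence "(x - 1) * (x - a*b) > 0" by simp
    thus False using le by simp
  qed
  ultimately show ?thesis using True by simp
next
  case False
  hence xn: "x < 0" using x by simp
  have le: "(x + a) * (x + b) \<le> 0" using eq xn s0 by (simp add: mult_nonpos_nonneg)
  have c1: "x + a \<le> 0 \<or> x + b \<le> 0"
  proof (rule ccontr)
    assume "\<not> ?thesis"
    hence "x + a > 0" "x + b > 0" by auto
    hence "(x + a) * (x + b) > 0" by simp
    thus False using le by simp
  qed
  have c2: "x + a \<ge> 0 \<or> x + b \<ge> 0"
  proof (rule ccontr)
    assume "\<not> ?thesis"
    hence "x + a < 0" "x + b < 0" by auto
    hence "(x + a) * (x + b) > 0" by (simp add: mult_neg_neg)
    thus False using le by simp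
  qed
  have h: "a \<le> a*b" "b \<le> a*b" using a b by (simp_all add: mult_le_cancel_left1 mult_le_cancel_right1)
  have "1 \<le> - x" using c1 c2 a b by linarith
  moreover have "- x \<le> a * b" using c1 c2 h by linarith
  ultimately show ?thesis using xn by simp
qed

lemma mu_loc:
  fixes \<mu> :: complex and a b s :: real
  assumes a: "a \<ge> 1" and b: "b \<ge> 1" and mu: "\<mu> \<noteq> 0"
    and eq: "(\<mu> + of_real a) * (\<mu> + of_real b) = \<mu> * of_real s" and s0: "0 \<le> s" and s1: "s \<le> (a+1)*(b+1)"
  shows "cmod \<mu> = sqrt (a*b) \<or> (\<mu> \<in> \<real> \<and> 1 \<le> cmod \<mu> \<and> cmod \<mu> \<le> a*b)"
proof -
  obtain x y where xy: "\<mu> = Complex x y" by (cases \<mu>)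
  have re: "x*x - y*y + (a+b)*x + a*b = x * s" and im: "2*x*y + (a+b)*y = s * y"
    using arg_cong[OF eq, of Re] arg_cong[OF eq, of Im] unfolding xy
    by (simp_all add: algebra_simps)
  show ?thesis
  proof (cases "y = 0")
    case True
    hence x0: "x \<noteq> 0" using mu xy by (auto simp: complex_eq_iff)
    have "(x + a) * (x + b) = x * s" using re True by (simp add: algebra_simps)
    from mu_loc_real[OF a b x0 this s0 s1] have "1 \<le> \<bar>x\<bar> \<and> \<bar>x\<bar> \<le> a * b" .
    moreover have "\<mu> \<in> \<real>" "cmod \<mu> = \<bar>x\<bar>" using True xy by (auto simp: complex_is_Real_iff cmod_def)
    ultimately show ?thesis by simp
  next
    case False
    have "(2*x + (a+b)) * y = s * y" using im by (simp add: algebra_simps)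
    hence s: "2*x + (a+b) = s" using False by simp
    have "x * s = 2*x*x + (a+b)*x" unfolding s[symmetric] by (simp add: algebra_simps)
    hence "x*x + y*y = a*b" using re by linarith
    hence "cmod \<mu> = sqrt (a*b)" unfolding xy cmod_def by (simp add: power2_eq_square)
    thus ?thesis by simp
  qed
qed

lemma mu_neg:
  fixes \<mu> :: complex and a b :: real
  assumes a: "a \<ge> 1" and b: "b \<ge> 1" and "\<mu> = - of_real a \<or> \<mu> = - of_real b"
  shows "\<mu> \<in> \<real> \<and> 1 \<le> cmod \<mu> \<and> cmod \<mu> \<le> a*b"
proof -
  have "a \<le> a*b" "b \<le> a*b" using a b by (simp_all add: mult_le_cancel_left1 mult_le_cancel_right1)
  thus ?thesis using assms by auto
qed

lemma not_in_regions:
  fixes \<mu> :: complex and dR dB :: nat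
  assumes dR: "dR \<ge> 1" and dB: "dB \<ge> 1" and mu: "\<mu> \<noteq> 0"
    and loc: "cmod \<mu> = sqrt (real dR * real dB) \<or> (\<mu> \<in> \<real> \<and> 1 \<le> cmod \<mu> \<and> cmod \<mu> \<le> real dR * real dB)"
  shows "1 / \<mu> \<notin> region_inner dR dB \<union> region_outer dR dB"
proof -
  let ?c = "real (dR * dB)"
  have "1 \<le> dR * dB" using dR dB by (metis mult_le_mono mult_1)
  hence c1: "?c \<ge> 1" by linarith
  have nz: "cmod (1/\<mu>) = 1 / cmod \<mu>" by (simp add: norm_divide)
  from loc show ?thesis
  proof
    assume h: "cmod \<mu> = sqrt (real dR * real dB)"
    hence "cmod (1/\<mu>) = 1 / sqrt ?c" using nz by simp
    thus ?thesis unfolding region_inner_def region_outer_def by auto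
  next
    assume h: "\<mu> \<in> \<real> \<and> 1 \<le> cmod \<mu> \<and> cmod \<mu> \<le> real dR * real dB"
    have r: "1/\<mu> \<in> \<real>" using h by auto
    have pos: "cmod \<mu> > 0" using mu by simp
    have l1: "cmod (1/\<mu>) \<le> 1" using h nz pos by simp
    have l2: "1 / ?c \<le> cmod (1/\<mu>)" using h nz pos by (simp add: frac_le)
    show ?thesis unfolding region_inner_def region_outer_def using r l1 l2 by auto
  qed
qed

lemma biregular_basic:
  assumes G: "biregular_graph V VR VB E dR dB"
  shows "finite V" "\<And>u w. E u w \<Longrightarrow> E w u" "\<And>u w. E u w \<Longrightarrow> u \<in> V \<and> w \<in> V"
    "\<And>u w. E u w \<Longrightarrow> u \<in> VR \<Longrightarrow> w \<in> VB" "\<And>u w. E u w \<Longrightarrow> u \<in> VB \<Longrightarrow> w \<in> VR"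
    "\<And>u. u \<in> VR \<Longrightarrow> card {w. E u w} = dR + 1" "\<And>u. u \<in> VB \<Longrightarrow> card {w. E u w} = dB + 1"
    "VR \<union> VB = V" "VR \<inter> VB = {}" "dR \<ge> 1" "dB \<ge> 1"
    "\<And>u. finite {w. E u w}"
proof -
  show "finite V" using G unfolding biregular_graph_def by blast
  show "\<And>u w. E u w \<Longrightarrow> E w u" using G unfolding biregular_graph_def by blast
  show V: "\<And>u w. E u w \<Longrightarrow> u \<in> V \<and> w \<in> V" using G unfolding biregular_graph_def by blast
  show "\<And>u w. E u w \<Longrightarrow> u \<in> VR \<Longrightarrow> w \<in> VB" using G unfolding biregular_graph_def by blast
  show "\<And>u w. E u w \<Longrightarrow> u \<in> VB \<Longrightarrow> w \<in> VR" using G unfolding biregular_graph_def by blast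
  show "\<And>u. u \<in> VR \<Longrightarrow> card {w. E u w} = dR + 1" using G unfolding biregular_graph_def by blast
  show "\<And>u. u \<in> VB \<Longrightarrow> card {w. E u w} = dB + 1" using G unfolding biregular_graph_def by blast
  show "VR \<union> VB = V" "VR \<inter> VB = {}" "dR \<ge> 1" "dB \<ge> 1" using G unfolding biregular_graph_def by blast+
  show "\<And>u. finite {w. E u w}"
  proof -
    fix u
    have "{w. E u w} \<subseteq> V" using V by blast
    thus "finite {w. E u w}" using \<open>finite V\<close> finite_subset by blast
  qed
qed

lemma swap_bip:
  fixes g :: "'a \<Rightarrow> 'a \<Rightarrow> 'b::comm_monoid_add"
  assumes G: "biregular_graph V VR VB E dR dB"
  shows "(\<Sum>u\<in>VR. \<Sum>w\<in>{w. E u w}. g u w) = (\<Sum>w\<in>VB. \<Sum>u\<in>{u. E w u}. g u w)"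
proof -
  note bb = biregular_basic[OF G]
  have fR: "finite VR" and fB: "finite VB" using bb(1) bb(8) by (auto intro: finite_subset)
  have "(\<Sum>u\<in>VR. \<Sum>w\<in>{w. E u w}. g u w) = (\<Sum>u\<in>VR. \<Sum>w\<in>{w. w \<in> VB \<and> E u w}. g u w)"
    by (rule sum.cong, simp, rule sum.cong, use bb(4) in auto)
  also have "\<dots> = (\<Sum>w\<in>VB. \<Sum>u\<in>{u. u \<in> VR \<and> E u w}. g u w)"
    by (rule sum.swap_restrict[OF fR fB])
  also have "\<dots> = (\<Sum>w\<in>VB. \<Sum>u\<in>{u. E w u}. g u w)"
    by (rule sum.cong, simp, rule sum.cong, use bb(2) bb(5) in auto)
  finally show ?thesis .
qed

lemma nb_eigen:
  fixes f :: "'a \<times> 'a \<Rightarrow> complex" and \<kappa> :: complex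
  assumes G: "biregular_graph V VR VB E dR dB"
    and lam: "\<kappa> \<noteq> 0"
    and fnz: "\<exists>u w. E u w \<and> f (u,w) \<noteq> 0"
    and ev: "\<And>u w. E u w \<Longrightarrow> \<kappa> * f (u,w) = (\<Sum>x\<in>{x. E w x} - {u}. f (w,x))"
  shows "\<kappa>^2 = 1 \<or> \<kappa>^2 = - of_nat dR \<or> \<kappa>^2 = - of_nat dB \<or>
    (\<exists>s::real. 0 \<le> s \<and> s \<le> (real dR + 1) * (real dB + 1) \<and>
       (\<kappa>^2 + of_nat dR) * (\<kappa>^2 + of_nat dB) = \<kappa>^2 * of_real s)"
proof (cases "\<kappa>^2 = 1")
  case True thus ?thesis by simp
next
  case False
  note bb = biregular_basic[OF G]
  define \<mu> where "\<mu> = \<kappa>^2"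
  define N where "N u = {w. E u w}" for u
  define F where "F u = (\<Sum>w\<in>N u. f (u,w))" for u
  define GG where "GG u = (\<Sum>w\<in>N u. F w)" for u
  have finN: "finite (N u)" for u using bb(12) unfolding N_def .
  have fR: "finite VR" and fB: "finite VB" using bb(1) bb(8) by (auto intro: finite_subset)
  have step: "\<kappa> * f (u,w) = F w - f (w,u)" if "E u w" for u w
  proof -
    have "u \<in> N w" using bb(2)[OF that] unfolding N_def by simp
    hence "F w = f (w,u) + (\<Sum>x\<in>N w - {u}. f (w,x))" unfolding F_def by (rule sum.remove[OF finN])
    thus ?thesis using ev[OF that] unfolding N_def by simp
  qed
  have m1: "\<mu> - 1 \<noteq> 0" using False unfolding \<mu>_def by simp
  have key: "(\<mu> - 1) * f (u,w) = \<kappa> * F w - F u" if "E u w" for u w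
  proof -
    have a: "\<kappa> * f (u,w) = F w - f (w,u)" using step[OF that] .
    have b: "\<kappa> * f (w,u) = F u - f (u,w)" using step[OF bb(2)[OF that]] .
    have "(\<mu> - 1) * f (u,w) = \<kappa> * (\<kappa> * f (u,w)) - f (u,w)" unfolding \<mu>_def by (simp add: algebra_simps power2_eq_square)
    also have "\<dots> = \<kappa> * F w - \<kappa> * f (w,u) - f(u,w)" unfolding a by (simp add: right_diff_distrib)
    also have "\<dots> = \<kappa> * F w - F u" using b by simp
    finally show ?thesis .
  qed
  have vert: "(\<mu> - 1 + of_nat (card (N u))) * F u = \<kappa> * GG u" for u
  proof -
    have "(\<mu> - 1) * F u = (\<Sum>w\<in>N u. (\<mu> - 1) * f (u,w))" unfolding F_def by (simp add: sum_distrib_left)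
    also have "\<dots> = (\<Sum>w\<in>N u. \<kappa> * F w - F u)" by (rule sum.cong, simp, rule key, simp add: N_def)
    also have "\<dots> = \<kappa> * GG u - of_nat (card (N u)) * F u" unfolding GG_def
      by (simp add: sum_subtractf sum_distrib_left)
    finally show ?thesis by (simp add: algebra_simps)
  qed
  have vR: "(\<mu> + of_nat dR) * F u = \<kappa> * GG u" if "u \<in> VR" for u
    using vert[of u] bb(6)[OF that] unfolding N_def by (simp add: algebra_simps)
  have vB: "(\<mu> + of_nat dB) * F u = \<kappa> * GG u" if "u \<in> VB" for u
    using vert[of u] bb(7)[OF that] unfolding N_def by (simp add: algebra_simps)
  obtain v where vV: "v \<in> V" and Fv: "F v \<noteq> 0"
  proof -
    obtain u w where uw: "E u w" "f (u,w) \<noteq> 0" using fnz by blast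
    have "(\<mu> - 1) * f (u,w) \<noteq> 0" using uw(2) m1 by simp
    hence "\<kappa> * F w - F u \<noteq> 0" using key[OF uw(1)] by simp
    hence "F w \<noteq> 0 \<or> F u \<noteq> 0" by auto
    thus ?thesis using that bb(3)[OF uw(1)] by blast
  qed
  define a where "a = (\<Sum>u\<in>VR. (cmod (F u))^2)"
  define b where "b = (\<Sum>u\<in>VB. (cmod (F u))^2)"
  define X where "X = (\<Sum>u\<in>VR. \<Sum>w\<in>N u. cnj (F u) * F w)"
  have a0: "a \<ge> 0" and b0: "b \<ge> 0" unfolding a_def b_def by (simp_all add: sum_nonneg)
  have cs: "cnj z * z = of_real ((cmod z)^2)" for z :: complex
    using complex_norm_square[of z] by (simp only: mult.commute)
  have cs2: "cnj z * (c * z) = c * of_real ((cmod z)^2)" for z c :: complex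
    by (simp only: cs[symmetric] mult_ac)
  have eqa: "(\<mu> + of_nat dR) * of_real a = \<kappa> * X"
  proof -
    have "(\<mu> + of_nat dR) * of_real a = (\<Sum>u\<in>VR. cnj (F u) * ((\<mu> + of_nat dR) * F u))"
      unfolding a_def of_real_sum sum_distrib_left by (rule sum.cong, simp, simp only: cs2)
    also have "\<dots> = (\<Sum>u\<in>VR. cnj (F u) * (\<kappa> * GG u))" by (rule sum.cong, simp, simp add: vR)
    also have "\<dots> = \<kappa> * X" unfolding X_def GG_def by (simp add: sum_distrib_left algebra_simps)
    finally show ?thesis .
  qed
  have Xc: "cnj X = (\<Sum>w\<in>VB. \<Sum>u\<in>N w. cnj (F w) * F u)"
  proof -
    have "cnj X = (\<Sum>u\<in>VR. \<Sum>w\<in>N u. F u * cnj (F w))" unfolding X_def by (simp add: cnj_sum mult.commute)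
    also have "\<dots> = (\<Sum>w\<in>VB. \<Sum>u\<in>N w. F u * cnj (F w))" unfolding N_def by (rule swap_bip[OF G])
    finally show ?thesis by (simp add: mult.commute)
  qed
  have eqb: "(\<mu> + of_nat dB) * of_real b = \<kappa> * cnj X"
  proof -
    have "(\<mu> + of_nat dB) * of_real b = (\<Sum>u\<in>VB. cnj (F u) * ((\<mu> + of_nat dB) * F u))"
      unfolding b_def of_real_sum sum_distrib_left by (rule sum.cong, simp, simp only: cs2)
    also have "\<dots> = (\<Sum>u\<in>VB. cnj (F u) * (\<kappa> * GG u))" by (rule sum.cong, simp, simp add: vB)
    also have "\<dots> = \<kappa> * cnj X" unfolding Xc GG_def by (simp add: sum_distrib_left algebra_simps)
    finally show ?thesis .
  qed
  show ?thesis
  proof (cases "a = 0")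
    case True
    have FR: "F u = 0" if "u \<in> VR" for u
    proof -
      have "\<forall>u\<in>VR. (cmod (F u))^2 = 0" using True fR unfolding a_def
        by (subst sum_nonneg_eq_0_iff[symmetric]) auto
      thus ?thesis using that by simp
    qed
    have "v \<in> VB" using vV Fv FR bb(8) by blast
    have "GG v = 0" unfolding GG_def
      by (rule sum.neutral, use FR bb(5)[OF _ \<open>v \<in> VB\<close>] N_def in auto)
    hence "\<mu> + of_nat dB = 0" using vB[OF \<open>v \<in> VB\<close>] Fv by simp
    hence "\<kappa>^2 = - of_nat dB" unfolding \<mu>_def by (simp add: eq_neg_iff_add_eq_0)
    thus ?thesis by simp
  next
    case an0: False
    show ?thesis
    proof (cases "b = 0")
      case True
      have FB: "F u = 0" if "u \<in> VB" for u
      proof -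
        have "\<forall>u\<in>VB. (cmod (F u))^2 = 0" using True fB unfolding b_def
          by (subst sum_nonneg_eq_0_iff[symmetric]) auto
        thus ?thesis using that by simp
      qed
      have "v \<in> VR" using vV Fv FB bb(8) by blast
      have "GG v = 0" unfolding GG_def
        by (rule sum.neutral, use FB bb(4)[OF _ \<open>v \<in> VR\<close>] N_def in auto)
      hence "\<mu> + of_nat dR = 0" using vR[OF \<open>v \<in> VR\<close>] Fv by simp
      hence "\<kappa>^2 = - of_nat dR" unfolding \<mu>_def by (simp add: eq_neg_iff_add_eq_0)
      thus ?thesis by simp
    next
      case bn0: False
      have ap: "a > 0" and bp: "b > 0" using a0 b0 an0 bn0 by auto
      define s where "s = (cmod X)^2 / (a * b)"
      have "(\<mu> + of_nat dR) * (\<mu> + of_nat dB) * of_real (a * b)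
          = ((\<mu> + of_nat dR) * of_real a) * ((\<mu> + of_nat dB) * of_real b)" by (simp add: algebra_simps)
      also have "\<dots> = \<mu> * (X * cnj X)" unfolding eqa eqb by (simp add: \<mu>_def algebra_simps power2_eq_square)
      also have "\<dots> = \<mu> * of_real ((cmod X)^2)" by (simp only: complex_norm_square)
      finally have eq: "(\<mu> + of_nat dR) * (\<mu> + of_nat dB) = \<mu> * of_real s"
        unfolding s_def using ap bp by (simp add: field_simps)
      have s0: "s \<ge> 0" unfolding s_def using ap bp by simp
      define T where "T = (\<Sum>u\<in>VR. \<Sum>w\<in>N u. cmod (F u) * cmod (F w))"
      have XT: "cmod X \<le> T" unfolding X_def T_def
        by (rule order.trans[OF norm_sum], rule sum_mono, rule order.trans[OF norm_sum], simp add: norm_mult)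
      have sig: "(\<Sum>u\<in>VR. \<Sum>w\<in>N u. g u w) = (\<Sum>p\<in>Sigma VR N. g (fst p) (snd p))" for g :: "'a \<Rightarrow> 'a \<Rightarrow> real"
        by (subst sum.Sigma[OF fR], use finN in \<open>auto simp: case_prod_beta\<close>)
      have T2: "T^2 \<le> (\<Sum>u\<in>VR. \<Sum>w\<in>N u. (cmod (F u))^2) * (\<Sum>u\<in>VR. \<Sum>w\<in>N u. (cmod (F w))^2)"
        unfolding T_def sig by (rule Cauchy_Schwarz_ineq_sum)
      have S1: "(\<Sum>u\<in>VR. \<Sum>w\<in>N u. (cmod (F u))^2) = (real dR + 1) * a"
        unfolding a_def sum_distrib_left by (rule sum.cong, simp, simp add: bb(6) N_def)
      have S2: "(\<Sum>u\<in>VR. \<Sum>w\<in>N u. (cmod (F w))^2) = (real dB + 1) * b"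
      proof -
        have "(\<Sum>u\<in>VR. \<Sum>w\<in>N u. (cmod (F w))^2) = (\<Sum>w\<in>VB. \<Sum>u\<in>N w. (cmod (F w))^2)"
          unfolding N_def by (rule swap_bip[OF G])
        also have "\<dots> = (real dB + 1) * b"
          unfolding b_def sum_distrib_left by (rule sum.cong, simp, simp add: bb(7) N_def)
        finally show ?thesis .
      qed
      have "(cmod X)^2 \<le> T^2" using XT by (simp add: power_mono)
      also have "\<dots> \<le> ((real dR + 1) * a) * ((real dB + 1) * b)" using T2 S1 S2 by simp
      finally have "(cmod X)^2 \<le> ((real dR + 1) * (real dB + 1)) * (a * b)" by (simp add: algebra_simps)
      hence s1: "s \<le> (real dR + 1) * (real dB + 1)" unfolding s_def using ap bp
        by (simp add: divide_le_eq)
      show ?thesis using eq s0 s1 unfolding \<mu>_def by blast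
    qed
  qed
qed

definition nbw :: "('a \<Rightarrow> 'a \<Rightarrow> bool) \<Rightarrow> nat \<Rightarrow> 'a list \<Rightarrow> bool" where
  "nbw E k ys \<longleftrightarrow> length ys = k + 2 \<and> (\<forall>i<k+1. E (ys!i) (ys!Suc i)) \<and> (\<forall>i<k. ys!(i+2) \<noteq> ys!i)"

definition Wset :: "('a \<Rightarrow> 'a \<Rightarrow> bool) \<Rightarrow> nat \<Rightarrow> 'a \<times> 'a \<Rightarrow> 'a \<times> 'a \<Rightarrow> 'a list set" where
  "Wset E k e e' = {ys. nbw E k ys \<and> ys!0 = fst e \<and> ys!1 = snd e \<and> ys!k = fst e' \<and> ys!(k+1) = snd e'}"

lemma Wset_finite:
  assumes fV: "finite V" and EV: "\<And>u w. E u w \<Longrightarrow> u \<in> V \<and> w \<in> V"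
  shows "finite (Wset E k e e')"
proof -
  have "Wset E k e e' \<subseteq> {ys. set ys \<subseteq> V \<and> length ys = k+2}"
  proof
    fix ys assume "ys \<in> Wset E k e e'"
    hence n: "nbw E k ys" unfolding Wset_def by blast
    have "ys!i \<in> V" if "i < k+2" for i
    proof (cases "i < k+1")
      case True thus ?thesis using n EV unfolding nbw_def by blast
    next
      case False
      hence "i = Suc k" using that by simp
      moreover have "E (ys!k) (ys!Suc k)" using n unfolding nbw_def by simp
      ultimately show ?thesis using EV by blast
    qed
    thus "ys \<in> {ys. set ys \<subseteq> V \<and> length ys = k+2}" using n unfolding nbw_def
      by (auto simp: in_set_conv_nth)
  qed
  moreover have "finite {ys. set ys \<subseteq> V \<and> length ys = k+2}" by (rule finite_lists_length_eq[OF fV])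
  ultimately show ?thesis by (rule finite_subset)
qed

lemma Wset_0: "Wset E 0 e e' = (if E (fst e) (snd e) \<and> e = e' then {[fst e, snd e]} else {})"
proof -
  have "ys \<in> Wset E 0 e e' \<longleftrightarrow> ys \<in> (if E (fst e) (snd e) \<and> e = e' then {[fst e, snd e]} else {})" for ys
  proof
    assume "ys \<in> Wset E 0 e e'"
    hence h: "length ys = 2" "E (ys!0) (ys!1)" "ys!0 = fst e" "ys!1 = snd e" "ys!0 = fst e'" "ys!1 = snd e'"
      unfolding Wset_def nbw_def by auto
    then obtain a b where "ys = [a,b]" by (cases ys; cases "tl ys"; auto)
    thus "ys \<in> (if E (fst e) (snd e) \<and> e = e' then {[fst e, snd e]} else {})" using h by (auto simp: prod_eq_iff)
  next
    assume "ys \<in> (if E (fst e) (snd e) \<and> e = e' then {[fst e, snd e]} else {})"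
    thus "ys \<in> Wset E 0 e e'" unfolding Wset_def nbw_def by (auto split: if_splits)
  qed
  thus ?thesis by blast
qed

lemma Wset_Suc:
  assumes cd: "E c d"
  shows "Wset E (Suc k) e (c,d) =
    (\<Union>e'\<in>{e'. E (fst e') (snd e') \<and> snd e' = c \<and> fst e' \<noteq> d}. (\<lambda>ys. ys @ [d]) ` Wset E k e e')"
proof (intro equalityI subsetI)
  fix ys assume "ys \<in> Wset E (Suc k) e (c,d)"
  hence n: "length ys = k + 3" "\<And>i. i<k+2 \<Longrightarrow> E (ys!i) (ys!Suc i)" "\<And>i. i < Suc k \<Longrightarrow> ys!(i+2) \<noteq> ys!i"
    and s: "ys!0 = fst e" "ys!1 = snd e" "ys!Suc k = c" "ys!(k+2) = d"
    unfolding Wset_def nbw_def by auto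
  define zs where "zs = butlast ys"
  have ys: "ys = zs @ [d]"
  proof -
    have "ys \<noteq> []" using n by auto
    hence "ys = butlast ys @ [last ys]" by simp
    moreover have "last ys = ys ! (k+2)" using n(1) \<open>ys \<noteq> []\<close> by (simp add: last_conv_nth)
    ultimately show ?thesis using s zs_def by simp
  qed
  have lz: "length zs = k + 2" using n(1) ys by simp
  have zi: "zs!i = ys!i" if "i < k+2" for i using ys lz that by (simp add: nth_append)
  have "zs \<in> Wset E k e (zs!k, c)"
    unfolding Wset_def nbw_def using lz n(2) n(3) s zi
    by (auto simp: zi)
  moreover have "E (zs!k) c" using n(2)[of k] zi s by simp
  moreover have "zs!k \<noteq> d" using n(3)[of k] zi s by auto
  ultimately show "ys \<in> (\<Union>e'\<in>{e'. E (fst e') (snd e') \<and> snd e' = c \<and> fst e' \<noteq> d}. (\<lambda>ys. ys @ [d]) ` Wset E k e e')"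
    using ys by force
next
  fix ys assume "ys \<in> (\<Union>e'\<in>{e'. E (fst e') (snd e') \<and> snd e' = c \<and> fst e' \<noteq> d}. (\<lambda>ys. ys @ [d]) ` Wset E k e e')"
  then obtain x zs where x: "E x c" "x \<noteq> d" and zs: "zs \<in> Wset E k e (x,c)" and ys: "ys = zs @ [d]"
    by auto
  from zs have n: "length zs = k + 2" "\<And>i. i<k+1 \<Longrightarrow> E (zs!i) (zs!Suc i)" "\<And>i. i < k \<Longrightarrow> zs!(i+2) \<noteq> zs!i"
    and s: "zs!0 = fst e" "zs!1 = snd e" "zs!k = x" "zs!(k+1) = c"
    unfolding Wset_def nbw_def by auto
  have yi: "ys!i = zs!i" if "i < k+2" for i using ys n(1) that by (simp add: nth_append)
  have yl: "ys!(k+2) = d" using ys n(1) by (simp add: nth_append)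
  have e1: "E (ys!i) (ys!Suc i)" if "i < k+2" for i
  proof (cases "i < k+1")
    case True thus ?thesis using n(2) yi that by simp
  next
    case False hence "i = k+1" using that by simp
    thus ?thesis using yi yl s cd by simp
  qed
  have e2: "ys!(i+2) \<noteq> ys!i" if "i < Suc k" for i
  proof (cases "i < k")
    case True thus ?thesis using n(3) yi that by simp
  next
    case False hence "i = k" using that by simp
    thus ?thesis using yi yl s x by simp
  qed
  show "ys \<in> Wset E (Suc k) e (c,d)"
    unfolding Wset_def nbw_def using e1 e2 yi yl s n(1) ys by auto
qed

lemma Wcard_Suc:
  assumes fV: "finite V" and EV: "\<And>u w. E u w \<Longrightarrow> u \<in> V \<and> w \<in> V" and cd: "E c d"
  shows "card (Wset E (Suc k) e (c,d)) =
    (\<Sum>e'\<in>{e'. E (fst e') (snd e') \<and> snd e' = c \<and> fst e' \<noteq> d}. card (Wset E k e e'))"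
proof -
  let ?Q = "{e'. E (fst e') (snd e') \<and> snd e' = c \<and> fst e' \<noteq> d}"
  have fQ: "finite ?Q"
  proof (rule finite_subset)
    show "?Q \<subseteq> V \<times> V" using EV by (auto simp: mem_Times_iff)
    show "finite (V \<times> V)" using fV by simp
  qed
  have inj: "inj_on (\<lambda>ys. ys @ [d]) A" for A :: "'a list set" by (rule inj_onI) simp
  have "card (Wset E (Suc k) e (c,d)) = card (\<Union>e'\<in>?Q. (\<lambda>ys. ys @ [d]) ` Wset E k e e')"
    using Wset_Suc[of E c d k e, OF cd] by simp
  also have "\<dots> = (\<Sum>e'\<in>?Q. card ((\<lambda>ys. ys @ [d]) ` Wset E k e e'))"
  proof (rule card_UN_disjoint[OF fQ])
    show "\<forall>i\<in>?Q. finite ((\<lambda>ys. ys @ [d]) ` Wset E k e i)" using Wset_finite[OF fV EV] by blast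
    show "\<forall>i\<in>?Q. \<forall>j\<in>?Q. i \<noteq> j \<longrightarrow> (\<lambda>ys. ys @ [d]) ` Wset E k e i \<inter> (\<lambda>ys. ys @ [d]) ` Wset E k e j = {}"
    proof (intro ballI impI)
      fix i j :: "'a \<times> 'a" assume ij: "i \<noteq> j"
      show "(\<lambda>ys. ys @ [d]) ` Wset E k e i \<inter> (\<lambda>ys. ys @ [d]) ` Wset E k e j = {}"
      proof (rule ccontr)
        assume "\<not> ?thesis"
        then obtain y1 y2 where "y1 \<in> Wset E k e i" "y2 \<in> Wset E k e j" "y1 @ [d] = y2 @ [d]" by blast
        hence "y1!k = fst i" "y1!(k+1) = snd i" "y1!k = fst j" "y1!(k+1) = snd j"
          unfolding Wset_def by auto
        hence "i = j" by (simp add: prod_eq_iff)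
        thus False using ij by simp
      qed
    qed
  qed
  also have "\<dots> = (\<Sum>e'\<in>?Q. card (Wset E k e e'))" by (rule sum.cong, simp, rule card_image[OF inj])
  finally show ?thesis .
qed

lemma closed_Wset:
  assumes l: "l \<ge> 1"
  shows "card (Wset E l e e) = card {ys. closed_nb_walk E l ys \<and> ys!0 = fst e \<and> ys!1 = snd e}"
proof (rule bij_betw_same_card, rule bij_betw_byWitness[where f' = "\<lambda>ys. ys @ [ys!1]"])
  let ?C = "{ys. closed_nb_walk E l ys \<and> ys!0 = fst e \<and> ys!1 = snd e}"
  show "\<forall>a\<in>Wset E l e e. butlast a @ [butlast a ! 1] = a"
  proof
    fix a assume "a \<in> Wset E l e e"
    hence a: "length a = l + 2" "a!1 = snd e" "a!(l+1) = snd e" unfolding Wset_def nbw_def by auto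
    have ne: "a \<noteq> []" using a by auto
    have "butlast a ! 1 = a ! 1" using a l by (simp add: nth_butlast)
    moreover have "last a = a!(l+1)" using a ne by (simp add: last_conv_nth)
    ultimately show "butlast a @ [butlast a ! 1] = a" using a ne by (metis append_butlast_last_id)
  qed
  show "\<forall>a'\<in>?C. butlast (a' @ [a' ! 1]) = a'" by simp
  show "butlast ` Wset E l e e \<subseteq> ?C"
  proof
    fix b assume "b \<in> butlast ` Wset E l e e"
    then obtain a where aW: "a \<in> Wset E l e e" and b: "b = butlast a" by blast
    from aW have n: "length a = l + 2" "\<And>i. i<l+1 \<Longrightarrow> E (a!i) (a!Suc i)" "\<And>i. i < l \<Longrightarrow> a!(i+2) \<noteq> a!i"
      and s: "a!0 = fst e" "a!1 = snd e" "a!l = fst e" "a!(l+1) = snd e"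
      unfolding Wset_def nbw_def by auto
    have lb: "length b = Suc l" using n b by simp
    have bi: "b!i = a!i" if "i < l+1" for i using b that n by (simp add: nth_butlast)
    have "b!(l-1) \<noteq> b!1"
    proof -
      have "a!((l-1)+2) \<noteq> a!(l-1)" using n(3)[of "l-1"] l by simp
      moreover have "(l-1)+2 = l+1" using l by simp
      ultimately show ?thesis using bi[of "l-1"] bi[of 1] s l by simp
    qed
    moreover have "\<forall>i<l. E (b!i) (b!Suc i)" using n(2) bi by simp
    moreover have "\<forall>i. i + 2 \<le> l \<longrightarrow> b!(i+2) \<noteq> b!i" using n(3) bi by simp
    moreover have "b!l = b!0" using bi[of l] bi[of 0] s by simp
    ultimately show "b \<in> ?C" unfolding closed_nb_walk_def using lb l bi[of 0] bi[of 1] s by auto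
  qed
  show "(\<lambda>ys. ys @ [ys!1]) ` ?C \<subseteq> Wset E l e e"
  proof
    fix a assume "a \<in> (\<lambda>ys. ys @ [ys!1]) ` ?C"
    then obtain b where bC: "b \<in> ?C" and a: "a = b @ [b!1]" by blast
    from bC have c: "length b = Suc l" "b!l = b!0" "\<And>i. i<l \<Longrightarrow> E (b!i) (b!Suc i)"
      "\<And>i. i + 2 \<le> l \<Longrightarrow> b!(i+2) \<noteq> b!i" "b!(l-1) \<noteq> b!1" "b!0 = fst e" "b!1 = snd e"
      unfolding closed_nb_walk_def by auto
    have ai: "a!i = b!i" if "i < l+1" for i using a c(1) that by (simp add: nth_append)
    have al: "a!(l+1) = b!1" using a c(1) by (simp add: nth_append)
    have e1: "E (a!i) (a!Suc i)" if "i < l+1" for i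
    proof (cases "i < l")
      case True thus ?thesis using c(3) ai that by simp
    next
      case False hence "i = l" using that by simp
      thus ?thesis using ai al c(2) c(3)[of 0] l by simp
    qed
    have e2: "a!(i+2) \<noteq> a!i" if "i < l" for i
    proof (cases "i + 2 \<le> l")
      case True thus ?thesis using c(4) ai that by simp
    next
      case False hence "i = l - 1" "i + 2 = l + 1" using that by auto
      thus ?thesis using ai al c(5) that by simp
    qed
    show "a \<in> Wset E l e e" unfolding Wset_def nbw_def
      using e1 e2 ai al c a l by auto
  qed
qed

lemma card_group:
  assumes "finite S" "finite T" "g ` S \<subseteq> T"
  shows "card S = (\<Sum>y\<in>T. card {x. x \<in> S \<and> g x = y})"
  using sum.group[OF assms, of "\<lambda>_. 1::nat"] by simp

lemma eta_sum:
  assumes fV: "finite V" and EV: "\<And>u w. E u w \<Longrightarrow> u \<in> V \<and> w \<in> V" and l: "l \<ge> 1"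
  shows "eta E l = (\<Sum>e\<in>{p. E (fst p) (snd p)}. card (Wset E l e e))"
proof -
  let ?C = "{ys. closed_nb_walk E l ys}"
  let ?D = "{p. E (fst p) (snd p)}"
  have fD: "finite ?D"
  proof (rule finite_subset)
    show "?D \<subseteq> V \<times> V" using EV by (auto simp: mem_Times_iff)
    show "finite (V \<times> V)" using fV by simp
  qed
  have e01: "E (ys!0) (ys!1)" if "ys \<in> ?C" for ys using that l unfolding closed_nb_walk_def by auto
  have e01': "E (ys!0) (ys!1)" if "closed_nb_walk E l ys" for ys using that l unfolding closed_nb_walk_def by auto
  have fC: "finite ?C"
  proof (rule finite_subset)
    show "?C \<subseteq> {ys. set ys \<subseteq> V \<and> length ys = Suc l}"
    proof
      fix ys assume ys: "ys \<in> ?C"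
      hence c: "length ys = Suc l" "ys!l = ys!0" "\<And>i. i<l \<Longrightarrow> E (ys!i) (ys!Suc i)"
        unfolding closed_nb_walk_def by auto
      have "ys!i \<in> V" if "i < Suc l" for i
      proof (cases "i < l")
        case True thus ?thesis using c(3) EV by blast
      next
        case False hence "i = l" using that by simp
        thus ?thesis using c(2) e01[OF ys] EV by simp
      qed
      thus "ys \<in> {ys. set ys \<subseteq> V \<and> length ys = Suc l}" using c(1) by (auto simp: in_set_conv_nth)
    qed
    show "finite {ys. set ys \<subseteq> V \<and> length ys = Suc l}" by (rule finite_lists_length_eq[OF fV])
  qed
  have "eta E l = (\<Sum>e\<in>graph_edges E. card {ys. ys \<in> ?C \<and> {ys!0, ys!1} = e})"
    unfolding eta_def closed_nb_walks_at_def by simp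
  also have "\<dots> = card ?C"
  proof (rule card_group[symmetric, OF fC])
    have "graph_edges E \<subseteq> Pow V"
    proof
      fix x assume "x \<in> graph_edges E"
      then obtain u w where "x = {u,w}" "E u w" unfolding graph_edges_def by blast
      thus "x \<in> Pow V" using EV by auto
    qed
    thus "finite (graph_edges E)" using fV by (simp add: finite_subset)
    show "(\<lambda>ys. {ys!0, ys!1}) ` ?C \<subseteq> graph_edges E"
    proof (rule image_subsetI)
      fix ys assume "ys \<in> ?C"
      hence "E (ys!0) (ys!1)" by (rule e01)
      thus "{ys!0, ys!1} \<in> graph_edges E" unfolding graph_edges_def mem_Collect_eq
        by (intro exI[of _ "ys!0"] exI[of _ "ys!1"]) simp
    qed
  qed
  also have "\<dots> = (\<Sum>e\<in>?D. card {ys. ys \<in> ?C \<and> (ys!0, ys!1) = e})"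
    by (rule card_group[OF fC fD]) (use e01' in auto)
  also have "\<dots> = (\<Sum>e\<in>?D. card (Wset E l e e))"
  proof (rule sum.cong[OF refl])
    fix e :: "'a \<times> 'a"
    have "{ys. ys \<in> ?C \<and> (ys!0, ys!1) = e} = {ys. closed_nb_walk E l ys \<and> ys!0 = fst e \<and> ys!1 = snd e}"
      by (auto simp: prod_eq_iff)
    thus "card {ys. ys \<in> ?C \<and> (ys!0, ys!1) = e} = card (Wset E l e e)"
      by (simp add: closed_Wset[OF l])
  qed
  finally show ?thesis .
qed

lemma mult_entry:
  assumes "A \<in> carrier_mat n m" "B \<in> carrier_mat m k" "i < n" "j < k"
  shows "(A * B) $$ (i,j) = (\<Sum>l<m. A $$ (i,l) * B $$ (l,j))"
  using assms by (simp add: scalar_prod_def atLeast0LessThan)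

lemma mult_vec_entry:
  assumes "A \<in> carrier_mat n m" "v \<in> carrier_vec m" "i < n"
  shows "vec_index (A *\<^sub>v v) i = (\<Sum>l<m. A $$ (i,l) * vec_index v l)"
  using assms by (simp add: scalar_prod_def atLeast0LessThan)

lemma sum_nth_distinct:
  assumes "distinct xs"
  shows "(\<Sum>i<length xs. g (xs!i)) = sum g (set xs)"
proof -
  have "sum g (set xs) = sum_list (map g xs)" using assms by (simp add: sum_list_distinct_conv_sum_set)
  also have "\<dots> = (\<Sum>i = 0..<length xs. g (xs!i))" by (simp add: sum_list_sum_nth)
  finally show ?thesis by (simp add: atLeast0LessThan)
qed

definition mtrace :: "complex mat \<Rightarrow> complex" where
  "mtrace A = (\<Sum>i<dim_row A. A $$ (i,i))"

lemma mtrace_comm: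
  assumes A: "A \<in> carrier_mat n m" and B: "B \<in> carrier_mat m n"
  shows "mtrace (A * B) = mtrace (B * A)"
proof -
  have "mtrace (A * B) = (\<Sum>i<n. (A * B) $$ (i,i))" unfolding mtrace_def using A by simp
  also have "\<dots> = (\<Sum>i<n. \<Sum>l<m. A $$ (i,l) * B $$ (l,i))"
    by (rule sum.cong[OF refl], rule mult_entry[OF A B], auto)
  also have "\<dots> = (\<Sum>l<m. \<Sum>i<n. B $$ (l,i) * A $$ (i,l))" by (subst sum.swap) (simp add: mult.commute)
  also have "\<dots> = (\<Sum>l<m. (B * A) $$ (l,l))"
    by (rule sum.cong[OF refl], rule mult_entry[OF B A, symmetric], auto)
  also have "\<dots> = mtrace (B * A)" unfolding mtrace_def using B by simp
  finally show ?thesis .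
qed

lemma mtrace_similar:
  assumes P: "P \<in> carrier_mat n n" and Q: "Q \<in> carrier_mat n n" and X: "X \<in> carrier_mat n n"
    and QP: "Q * P = 1\<^sub>m n"
  shows "mtrace (P * X * Q) = mtrace X"
proof -
  have "mtrace (P * X * Q) = mtrace (Q * (P * X))" by (rule mtrace_comm[of _ n n], use P X Q in auto)
  also have "Q * (P * X) = (Q * P) * X" using P Q X by (simp add: assoc_mult_mat)
  also have "\<dots> = X" using QP X by simp
  finally show ?thesis .
qed

lemma upper_pow:
  fixes T :: "complex mat"
  assumes T: "T \<in> carrier_mat n n" and ut: "upper_triangular T"
  shows "upper_triangular (T ^\<^sub>m k) \<and> (\<forall>j<n. (T ^\<^sub>m k) $$ (j,j) = (T $$ (j,j))^k)"
proof (induction k)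
  case 0
  show ?case using T by (auto simp: upper_triangular_def)
next
  case (Suc k)
  have Tk: "T ^\<^sub>m k \<in> carrier_mat n n" using T by simp
  have utT: "T $$ (i,j) = 0" if "i < n" "j < i" for i j using ut T that unfolding upper_triangular_def by auto
  have utK: "(T ^\<^sub>m k) $$ (i,j) = 0" if "i < n" "j < i" for i j
    using Suc.IH Tk that unfolding upper_triangular_def by auto
  have e: "(T ^\<^sub>m Suc k) $$ (i,j) = (\<Sum>l<n. (T ^\<^sub>m k) $$ (i,l) * T $$ (l,j))" if "i < n" "j < n" for i j
    using mult_entry[OF Tk T that] by simp
  have "upper_triangular (T ^\<^sub>m Suc k)"
    unfolding upper_triangular_def
  proof (intro allI impI)
    fix i j assume ij: "i < dim_row (T ^\<^sub>m Suc k)" "j < i"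
    hence i: "i < n" and j: "j < n" using T by auto
    have "(\<Sum>l<n. (T ^\<^sub>m k) $$ (i,l) * T $$ (l,j)) = 0"
    proof (rule sum.neutral, intro ballI)
      fix l assume "l \<in> {..<n}"
      show "(T ^\<^sub>m k) $$ (i,l) * T $$ (l,j) = 0"
      proof (cases "l < i")
        case True thus ?thesis using utK[OF i] by simp
      next
        case False hence "j < l" using ij by simp
        thus ?thesis using utT \<open>l \<in> {..<n}\<close> by simp
      qed
    qed
    thus "(T ^\<^sub>m Suc k) $$ (i,j) = 0" using e[OF i j] by simp
  qed
  moreover have "(T ^\<^sub>m Suc k) $$ (j,j) = (T $$ (j,j))^Suc k" if j: "j < n" for j
  proof -
    have "(\<Sum>l<n. (T ^\<^sub>m k) $$ (j,l) * T $$ (l,j)) = (\<Sum>l\<in>{j}. (T ^\<^sub>m k) $$ (j,l) * T $$ (l,j))"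
    proof (rule sum.mono_neutral_right, simp, use j in simp, intro ballI)
      fix l assume "l \<in> {..<n} - {j}"
      hence l: "l \<in> {..<n}" "l \<noteq> j" by auto
      show "(T ^\<^sub>m k) $$ (j,l) * T $$ (l,j) = 0"
      proof (cases "l < j")
        case True thus ?thesis using utK[OF j] by simp
      next
        case False hence "j < l" using l by simp
        thus ?thesis using utT l by simp
      qed
    qed
    thus ?thesis using e[OF j j] Suc.IH j by (simp add: mult.commute)
  qed
  ultimately show ?case by blast
qed

definition nbmat :: "('a \<times> 'a) list \<Rightarrow> complex mat" where
  "nbmat ed = mat (length ed) (length ed)
     (\<lambda>(i,j). if snd (ed!i) = fst (ed!j) \<and> snd (ed!j) \<noteq> fst (ed!i) then 1 else 0)"

lemma nbmat_carrier: "nbmat ed \<in> carrier_mat (length ed) (length ed)"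
  unfolding nbmat_def by simp

lemma nbmat_pow:
  assumes fV: "finite V" and EV: "\<And>u w. E u w \<Longrightarrow> u \<in> V \<and> w \<in> V"
    and dist: "distinct ed" and sed: "set ed = {p. E (fst p) (snd p)}"
  shows "i < length ed \<Longrightarrow> j < length ed \<Longrightarrow>
    (nbmat ed ^\<^sub>m k) $$ (i,j) = of_nat (card (Wset E k (ed!i) (ed!j)))"
proof (induction k arbitrary: j)
  case 0
  have Ei: "E (fst (ed!i)) (snd (ed!i))" using sed 0 nth_mem[of i ed] by auto
  have "(ed!i = ed!j) = (i = j)" using dist 0 by (simp add: nth_eq_iff_index_eq)
  thus ?case using 0 Ei nbmat_carrier[of ed] by (simp add: Wset_0)
next
  case (Suc k)
  let ?n = "length ed"
  let ?B = "nbmat ed"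
  obtain c d where cd: "ed!j = (c,d)" by (cases "ed!j")
  have Ecd: "E c d" using sed Suc.prems nth_mem[of j ed] cd by auto
  have "(?B ^\<^sub>m Suc k) $$ (i,j) = (?B ^\<^sub>m k * ?B) $$ (i,j)" by simp
  also have "\<dots> = (\<Sum>l<?n. (?B ^\<^sub>m k) $$ (i,l) * ?B $$ (l,j))"
    by (rule mult_entry[of _ ?n ?n _ ?n], use nbmat_carrier[of ed] Suc.prems in auto)
  also have "\<dots> = (\<Sum>l<?n. (\<lambda>e'. if snd e' = c \<and> d \<noteq> fst e' then of_nat (card (Wset E k (ed!i) e')) else 0) (ed!l))"
    by (rule sum.cong[OF refl], use Suc.IH Suc.prems cd in \<open>auto simp: nbmat_def\<close>)
  also have "\<dots> = (\<Sum>e'\<in>set ed. if snd e' = c \<and> d \<noteq> fst e' then of_nat (card (Wset E k (ed!i) e')) else 0)"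
    by (rule sum_nth_distinct[OF dist])
  also have "\<dots> = (\<Sum>e'\<in>{e'\<in>set ed. snd e' = c \<and> d \<noteq> fst e'}. of_nat (card (Wset E k (ed!i) e')))"
    by (simp add: sum.inter_filter)
  also have "{e'\<in>set ed. snd e' = c \<and> d \<noteq> fst e'} = {e'. E (fst e') (snd e') \<and> snd e' = c \<and> fst e' \<noteq> d}"
    using sed by auto
  also have "(\<Sum>e'\<in>\<dots>. of_nat (card (Wset E k (ed!i) e'))) = (of_nat (card (Wset E (Suc k) (ed!i) (c,d))) :: complex)"
    by (simp add: Wcard_Suc[of V E c d k "ed!i", OF fV EV Ecd])
  finally show ?case using cd by simp
qed

lemma trace_eta:
  assumes fV: "finite V" and EV: "\<And>u w. E u w \<Longrightarrow> u \<in> V \<and> w \<in> V"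
    and dist: "distinct ed" and sed: "set ed = {p. E (fst p) (snd p)}" and l: "l \<ge> 1"
  shows "mtrace (nbmat ed ^\<^sub>m l) = of_nat (eta E l)"
proof -
  have "mtrace (nbmat ed ^\<^sub>m l) = (\<Sum>i<length ed. (nbmat ed ^\<^sub>m l) $$ (i,i))"
    unfolding mtrace_def using nbmat_carrier[of ed] by simp
  also have "\<dots> = (\<Sum>i<length ed. (\<lambda>e. of_nat (card (Wset E l e e))) (ed!i))"
    by (rule sum.cong[OF refl], simp add: nbmat_pow[OF fV EV dist sed])
  also have "\<dots> = (\<Sum>e\<in>set ed. of_nat (card (Wset E l e e)))" by (rule sum_nth_distinct[OF dist])
  also have "\<dots> = of_nat (eta E l)"
  proof -
    have "eta E l = (\<Sum>e\<in>{p. E (fst p) (snd p)}. card (Wset E l e e))" by (rule eta_sum[OF fV EV l])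
    thus ?thesis by (simp add: sed)
  qed
  finally show ?thesis .
qed

lemma fun_eigen_sq:
  fixes Bop :: "(nat \<Rightarrow> complex) \<Rightarrow> nat \<Rightarrow> complex"
  assumes lin: "\<And>g1 g2 c i. Bop (\<lambda>j. g1 j + c * g2 j) i = Bop g1 i + c * Bop g2 i"
    and cong: "\<And>g1 g2 i. (\<And>j. j < n \<Longrightarrow> g1 j = g2 j) \<Longrightarrow> i < n \<Longrightarrow> Bop g1 i = Bop g2 i"
    and ev: "\<And>i. i < n \<Longrightarrow> Bop (Bop g) i = \<mu> * g i"
    and nz: "\<exists>i<n. g i \<noteq> 0"
  shows "\<exists>\<rho> h. \<rho>^2 = \<mu> \<and> (\<exists>i<n. h i \<noteq> 0) \<and> (\<forall>i<n. Bop h i = \<rho> * h i)"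
proof -
  define \<kappa> where "\<kappa> = csqrt \<mu>"
  have k2: "\<kappa>^2 = \<mu>" unfolding \<kappa>_def by simp
  define w where "w i = Bop g i + \<kappa> * g i" for i
  show ?thesis
  proof (cases "\<forall>i<n. w i = 0")
    case True
    have "Bop g i = (- \<kappa>) * g i" if "i < n" for i using True that unfolding w_def
      by (simp add: eq_neg_iff_add_eq_0)
    thus ?thesis using k2 nz by (intro exI[of _ "- \<kappa>"] exI[of _ g]) auto
  next
    case False
    have "Bop w i = \<kappa> * w i" if i: "i < n" for i
    proof -
      have "Bop w i = Bop (Bop g) i + \<kappa> * Bop g i" unfolding w_def by (rule lin)
      also have "\<dots> = \<kappa> * w i" unfolding ev[OF i] w_def k2[symmetric]
        by (simp add: algebra_simps power2_eq_square)
      finally show ?thesis .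
    qed
    thus ?thesis using False k2 by (intro exI[of _ \<kappa>] exI[of _ w]) auto
  qed
qed

definition Bop :: "complex mat \<Rightarrow> nat \<Rightarrow> (nat \<Rightarrow> complex) \<Rightarrow> nat \<Rightarrow> complex" where
  "Bop B n g i = (\<Sum>l<n. B $$ (i,l) * g l)"

lemma eig_to_fun:
  assumes B: "B \<in> carrier_mat n n" and ev: "eigenvalue (B * B) \<mu>"
  shows "\<exists>\<rho> h. \<rho>^2 = \<mu> \<and> (\<exists>i<n. h i \<noteq> 0) \<and> (\<forall>i<n. Bop B n h i = \<rho> * h i)"
proof -
  obtain v where v: "v \<in> carrier_vec n" "v \<noteq> 0\<^sub>v n" "(B * B) *\<^sub>v v = \<mu> \<cdot>\<^sub>v v"
    using ev B unfolding eigenvalue_def eigenvector_def by auto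
  define g where "g i = vec_index v i" for i
  have Bv: "B *\<^sub>v v \<in> carrier_vec n" using B v by simp
  have bv: "vec_index (B *\<^sub>v v) i = Bop B n g i" if "i < n" for i
    unfolding Bop_def g_def by (rule mult_vec_entry[OF B v(1) that])
  have ev2: "Bop B n (Bop B n g) i = \<mu> * g i" if i: "i < n" for i
  proof -
    have "Bop B n (Bop B n g) i = Bop B n (vec_index (B *\<^sub>v v)) i"
      unfolding Bop_def[of B n "Bop B n g"] Bop_def[of B n "vec_index (B *\<^sub>v v)"]
      by (rule sum.cong[OF refl], simp add: bv)
    also have "\<dots> = vec_index (B *\<^sub>v (B *\<^sub>v v)) i"
      unfolding Bop_def by (rule mult_vec_entry[OF B Bv i, symmetric])
    also have "B *\<^sub>v (B *\<^sub>v v) = (B * B) *\<^sub>v v" using B v by simp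
    also have "vec_index (\<dots>) i = \<mu> * g i" unfolding v(3) g_def using v(1) i by simp
    finally show ?thesis .
  qed
  have nz: "\<exists>i<n. g i \<noteq> 0"
  proof (rule ccontr)
    assume "\<not> ?thesis"
    hence "v = 0\<^sub>v n" using v(1) unfolding g_def by (intro eq_vecI) auto
    thus False using v(2) by simp
  qed
  have lin: "Bop B n (\<lambda>j. g1 j + c * g2 j) i = Bop B n g1 i + c * Bop B n g2 i" for g1 g2 c i
    unfolding Bop_def by (simp add: sum.distrib sum_distrib_left algebra_simps)
  have cg: "Bop B n g1 i = Bop B n g2 i" if "\<And>j. j < n \<Longrightarrow> g1 j = g2 j" for g1 g2 i
    unfolding Bop_def by (rule sum.cong, simp, simp add: that)
  show ?thesis by (rule fun_eigen_sq[where Bop = "Bop B n", OF lin cg ev2 nz])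
qed

lemma eig_loc:
  assumes G: "biregular_graph V VR VB E dR dB" and dist: "distinct ed"
    and sed: "set ed = {p. E (fst p) (snd p)}"
    and ev: "eigenvalue (nbmat ed * nbmat ed) \<mu>" and \<mu>0: "\<mu> \<noteq> 0"
  shows "cmod \<mu> = sqrt (real dR * real dB) \<or> (\<mu> \<in> \<real> \<and> 1 \<le> cmod \<mu> \<and> cmod \<mu> \<le> real dR * real dB)"
proof -
  note bb = biregular_basic[OF G]
  define n where "n = length ed"
  define B where "B = nbmat ed"
  have Bc: "B \<in> carrier_mat n n" unfolding B_def n_def by (rule nbmat_carrier)
  obtain \<rho> h where rh: "\<rho>^2 = \<mu>" "\<exists>i<n. h i \<noteq> 0" "\<forall>i<n. Bop B n h i = \<rho> * h i"
    using eig_to_fun[OF Bc] ev unfolding B_def by blast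
  have \<rho>0: "\<rho> \<noteq> 0" using rh(1) \<mu>0 by auto
  have inj: "inj_on (\<lambda>i. ed!i) {..<n}" unfolding n_def using dist by (simp add: inj_on_nth)
  define f where "f p = h (the_inv_into {..<n} (\<lambda>i. ed!i) p)" for p
  have fi: "f (ed!i) = h i" if "i < n" for i unfolding f_def using the_inv_into_f_f[OF inj] that by simp
  have fnz: "\<exists>u w. E u w \<and> f (u,w) \<noteq> 0"
  proof -
    obtain i where i: "i < n" "h i \<noteq> 0" using rh(2) by blast
    have "ed!i \<in> set ed" using i unfolding n_def by simp
    hence "E (fst (ed!i)) (snd (ed!i))" using sed by auto
    moreover have "f (fst (ed!i), snd (ed!i)) \<noteq> 0" using fi[OF i(1)] i by simp
    ultimately show ?thesis by blast
  qed
  have evf: "\<rho> * f (u,w) = (\<Sum>x\<in>{x. E w x} - {u}. f (w,x))" if uw: "E u w" for u w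
  proof -
    have "(u,w) \<in> set ed" using sed uw by simp
    then obtain i where i: "i < n" "ed!i = (u,w)" unfolding n_def by (auto simp: in_set_conv_nth)
    define q where "q e' = (if fst e' = w \<and> snd e' \<noteq> u then f e' else 0)" for e'
    have "\<rho> * f (u,w) = Bop B n h i" using rh(3) i fi[OF i(1)] by simp
    also have "\<dots> = (\<Sum>l<n. q (ed!l))" unfolding Bop_def
    proof (rule sum.cong[OF refl])
      fix l assume "l \<in> {..<n}"
      hence l: "l < n" by simp
      show "B $$ (i,l) * h l = q (ed!l)"
        unfolding B_def nbmat_def q_def using i l fi[OF l] unfolding n_def by auto
    qed
    also have "\<dots> = (\<Sum>e'\<in>set ed. q e')" unfolding n_def by (rule sum_nth_distinct[OF dist])
    also have "\<dots> = (\<Sum>e'\<in>{e'\<in>set ed. fst e' = w \<and> snd e' \<noteq> u}. f e')"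
      unfolding q_def by (simp add: sum.inter_filter)
    also have "{e'\<in>set ed. fst e' = w \<and> snd e' \<noteq> u} = (\<lambda>x. (w,x)) ` ({x. E w x} - {u})"
      using sed by auto
    also have "(\<Sum>e'\<in>\<dots>. f e') = (\<Sum>x\<in>{x. E w x} - {u}. f (w,x))"
      by (subst sum.reindex) (auto simp: inj_on_def)
    finally show ?thesis .
  qed
  have a: "real dR \<ge> 1" and b: "real dB \<ge> 1" using bb(10) bb(11) by auto
  from nb_eigen[OF G \<rho>0 fnz evf]
  have "\<rho>^2 = 1 \<or> \<rho>^2 = - of_nat dR \<or> \<rho>^2 = - of_nat dB \<or>
    (\<exists>s::real. 0 \<le> s \<and> s \<le> (real dR + 1) * (real dB + 1) \<and>
       (\<rho>^2 + of_nat dR) * (\<rho>^2 + of_nat dB) = \<rho>^2 * of_real s)" .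
  hence "\<mu> = 1 \<or> \<mu> = - of_real (real dR) \<or> \<mu> = - of_real (real dB) \<or>
    (\<exists>s::real. 0 \<le> s \<and> s \<le> (real dR + 1) * (real dB + 1) \<and>
       (\<mu> + of_real (real dR)) * (\<mu> + of_real (real dB)) = \<mu> * of_real s)"
    unfolding rh(1) by simp
  moreover have "1 \<le> real dR * real dB" using a b by (metis mult_mono' mult_1 zero_le_one)
  ultimately show ?thesis
  proof (elim disjE exE conjE)
    assume "\<mu> = 1" "1 \<le> real dR * real dB" thus ?thesis by simp
  next
    assume "\<mu> = - of_real (real dR)"
    thus ?thesis using mu_neg[OF a b] by blast
  next
    assume "\<mu> = - of_real (real dB)"
    thus ?thesis using mu_neg[OF a b] by blast
  next
    fix s assume "0 \<le> s" "s \<le> (real dR + 1) * (real dB + 1)"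
      "(\<mu> + of_real (real dR)) * (\<mu> + of_real (real dB)) = \<mu> * of_real s"
    thus ?thesis using mu_loc[OF a b \<mu>0] by blast
  qed
qed

lemma poly_linear_root: "\<mu> \<in> set as \<Longrightarrow> poly (\<Prod>a\<leftarrow>as. [:- a, 1:]) (\<mu>::complex) = 0"
  by (induction as) auto

lemma pow_double:
  assumes B: "B \<in> carrier_mat n n"
  shows "B ^\<^sub>m (2 * k) = (B * B) ^\<^sub>m k"
proof (induction k)
  case 0 show ?case using B by simp
next
  case (Suc k)
  have "B ^\<^sub>m (2 * Suc k) = B ^\<^sub>m (2 * k) * B * B" by (simp add: mult_2)
  also have "\<dots> = (B * B) ^\<^sub>m k * B * B" using Suc by simp
  also have "\<dots> = (B * B) ^\<^sub>m k * (B * B)" using B by (simp add: assoc_mult_mat[of _ n n _ n _ n])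
  finally show ?case by simp
qed

lemma geom_suc:
  fixes x :: complex assumes "cmod x < 1"
  shows "summable (\<lambda>m. x ^ Suc m)" "(\<Sum>m. x ^ Suc m) = x / (1 - x)"
proof -
  have s: "summable (\<lambda>m. x ^ m)" by (rule summable_geometric[OF assms])
  show "summable (\<lambda>m. x ^ Suc m)" using summable_mult[OF s, of x] by simp
  have "(\<Sum>m. x ^ Suc m) = (\<Sum>m. x * x ^ m)" by simp
  also have "\<dots> = x * (1 / (1 - x))" by (simp add: suminf_mult[OF s] suminf_geometric[OF assms])
  finally show "(\<Sum>m. x ^ Suc m) = x / (1 - x)" by simp
qed

theorem theorem5p4:
  fixes V VR VB :: "'a set" and E :: "'a \<Rightarrow> 'a \<Rightarrow> bool" and \<delta>R \<delta>B :: nat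
  assumes "biregular_graph V VR VB E \<delta>R \<delta>B"
  shows "\<exists>S h. open S \<and> connected S \<and>
           region_inner \<delta>R \<delta>B \<union> (region_outer \<delta>R \<delta>B - {\<i>, - \<i>}) \<subseteq> S \<and>
           h holomorphic_on S \<and>
           (\<exists>\<epsilon>>0. \<forall>z\<in>ball 0 \<epsilon>. h z = P_G E z) \<and>
           not_essential h \<i> \<and> not_essential h (- \<i>)"
proof -
  note G = assms
  note bb = biregular_basic[OF G]
  have fD: "finite {p. E (fst p) (snd p)}"
  proof (rule finite_subset)
    show "{p. E (fst p) (snd p)} \<subseteq> V \<times> V" using bb(3) by (auto simp: mem_Times_iff)
    show "finite (V \<times> V)" using bb(1) by simp
  qed
  obtain ed where sed: "set ed = {p. E (fst p) (snd p)}" and dist: "distinct ed"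
    using finite_distinct_list[OF fD] by blast
  define n where "n = length ed"
  define B where "B = nbmat ed"
  define C where "C = B * B"
  have Bc: "B \<in> carrier_mat n n" unfolding B_def n_def by (rule nbmat_carrier)
  have Cc: "C \<in> carrier_mat n n" unfolding C_def using Bc by simp
  obtain as where cp: "char_poly C = (\<Prod>a\<leftarrow>as. [:- a, 1:])" and las: "length as = n"
    using char_poly_factorized[OF Cc] by blast
  obtain T P Q where sd: "schur_decomposition C as = (T,P,Q)" by (cases "schur_decomposition C as") auto
  from schur_decomposition[OF Cc cp sd]
  have sw: "similar_mat_wit C T P Q" and ut: "upper_triangular T" and dT: "diag_mat T = as" by auto
  have dimC: "dim_row C = n" using Cc by simp
  have Tc: "T \<in> carrier_mat n n" and Pc: "P \<in> carrier_mat n n" and Qc: "Q \<in> carrier_mat n n"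
    and QP: "Q * P = 1\<^sub>m n"
    using sw unfolding similar_mat_wit_def Let_def dimC by auto
  have Tjj: "T $$ (j,j) = as ! j" if "j < n" for j
    using dT that Tc unfolding diag_mat_def by auto
  have eta_eq: "of_nat (eta E (2 * k)) = (\<Sum>j<n. (as!j)^k)" if k: "k \<ge> 1" for k
  proof -
    have l1: "1 \<le> 2 * k" using k by linarith
    have "of_nat (eta E (2 * k)) = mtrace (B ^\<^sub>m (2 * k))"
      unfolding B_def using trace_eta[OF bb(1) bb(3) dist sed l1] by simp
    also have "B ^\<^sub>m (2 * k) = C ^\<^sub>m k" unfolding C_def by (rule pow_double[OF Bc])
    also have "C ^\<^sub>m k = P * T ^\<^sub>m k * Q" by (rule similar_mat_wit_pow_id[OF sw])
    also have "mtrace (P * T ^\<^sub>m k * Q) = mtrace (T ^\<^sub>m k)"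
      by (rule mtrace_similar[OF Pc Qc _ QP], use Tc in simp)
    also have "\<dots> = (\<Sum>j<n. (T ^\<^sub>m k) $$ (j,j))" unfolding mtrace_def using Tc by simp
    also have "\<dots> = (\<Sum>j<n. (as!j)^k)"
      by (rule sum.cong[OF refl], use upper_pow[OF Tc ut] Tjj in auto)
    finally show ?thesis .
  qed
  have loc: "1 / \<mu> \<notin> region_inner \<delta>R \<delta>B \<union> region_outer \<delta>R \<delta>B" if "\<mu> \<in> set as" "\<mu> \<noteq> 0" for \<mu>
  proof -
    have "poly (char_poly C) \<mu> = 0" unfolding cp by (rule poly_linear_root[OF that(1)])
    hence "eigenvalue C \<mu>" using eigenvalue_root_char_poly[OF Cc] by simp
    hence "eigenvalue (nbmat ed * nbmat ed) \<mu>" unfolding C_def B_def .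
    from eig_loc[OF G dist sed this that(2)]
    show ?thesis by (rule not_in_regions[OF bb(10) bb(11) that(2)])
  qed
  define Z where "Z = (\<lambda>\<mu>. 1 / \<mu>) ` {\<mu>\<in>set as. \<mu> \<noteq> 0}"
  define S where "S = UNIV - Z"
  define h where "h z = of_nat (num_edges E) + (\<Sum>j<n. as!j * z / (1 - as!j * z))" for z
  have fZ: "finite Z" unfolding Z_def by simp
  have oS: "open S" unfolding S_def using fZ by (simp add: open_Diff finite_imp_closed)
  have cS: "connected S" unfolding S_def
    by (rule connected_open_diff_countable) (use fZ in \<open>auto simp: countable_finite\<close>)
  have sub: "region_inner \<delta>R \<delta>B \<union> (region_outer \<delta>R \<delta>B - {\<i>, - \<i>}) \<subseteq> S"
    unfolding S_def Z_def using loc by blast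
  have den: "1 - as!j * z \<noteq> 0" if "z \<in> S" "j < n" for z j
  proof
    assume 0: "1 - as!j * z = 0"
    hence nz: "as!j \<noteq> 0" by auto
    hence "z = 1 / as!j" using 0 by (simp add: field_simps)
    moreover have "as!j \<in> set as" using that las by simp
    ultimately have "z \<in> Z" unfolding Z_def using nz by blast
    thus False using that unfolding S_def by simp
  qed
  have hol: "h holomorphic_on S" unfolding h_def
    by (intro holomorphic_intros) (use den in auto)
  define M where "M = (\<Sum>j<n. cmod (as!j))"
  have M0: "M \<ge> 0" unfolding M_def by (simp add: sum_nonneg)
  define \<epsilon> where "\<epsilon> = 1 / (M + 1)"
  have \<epsilon>0: "\<epsilon> > 0" unfolding \<epsilon>_def using M0 by simp
  have agree: "h z = P_G E z" if z: "z \<in> ball 0 \<epsilon>" for z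
  proof -
    have zn: "cmod z < \<epsilon>" using z by simp
    have small: "cmod (as!j * z) < 1" if j: "j < n" for j
    proof -
      have "cmod (as!j) \<le> M" unfolding M_def by (rule member_le_sum) (use j in auto)
      hence "cmod (as!j) * cmod z \<le> M * cmod z" by (simp add: mult_right_mono)
      also have "\<dots> \<le> M * \<epsilon>" using zn M0 by (simp add: mult_left_mono)
      also have "\<dots> < 1" unfolding \<epsilon>_def using M0 by (simp add: field_simps)
      finally show ?thesis by (simp add: norm_mult)
    qed
    have trm: "of_nat (eta E (2 * Suc m)) * z ^ Suc m = (\<Sum>j<n. (as!j * z) ^ Suc m)" for m
    proof -
      have "of_nat (eta E (2 * Suc m)) * z ^ Suc m = (\<Sum>j<n. (as!j)^Suc m) * z ^ Suc m"
        using eta_eq[of "Suc m"] by simp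
      also have "\<dots> = (\<Sum>j<n. (as!j)^Suc m * z ^ Suc m)" by (rule sum_distrib_right)
      also have "\<dots> = (\<Sum>j<n. (as!j * z) ^ Suc m)" by (simp only: power_mult_distrib)
      finally show ?thesis .
    qed
    have "(\<Sum>m. of_nat (eta E (2 * Suc m)) * z ^ Suc m) = (\<Sum>m. \<Sum>j<n. (as!j * z) ^ Suc m)"
      by (simp only: trm)
    also have "\<dots> = (\<Sum>j<n. \<Sum>m. (as!j * z) ^ Suc m)"
      by (rule suminf_sum) (use small geom_suc(1) in auto)
    also have "\<dots> = (\<Sum>j<n. as!j * z / (1 - as!j * z))"
      by (rule sum.cong[OF refl]) (use small geom_suc(2) in auto)
    finally show ?thesis unfolding h_def P_G_def by simp
  qed
  have mero: "h meromorphic_on {w}" for w unfolding h_def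
    by (intro meromorphic_intros)
  show ?thesis
    using oS cS sub hol \<epsilon>0 agree meromorphic_on_not_essential[OF mero] by blast
qed

end
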